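(* Every partial Steiner triple system of order $n$ has a cyclically $\ell$-good sequencing for each positive integer $\ell \leq 0.0908\, n^{1/2}$.
   Context: A partial Steiner triple system of order $n$ is a pair $(X,\mathcal{B})$ where $X$ is an $n$-set of vertices ($n\ge 3$) and $\mathcal{B}$ is a collection of $3$-subsets of $X$ (blocks) such that each $2$-subset of $X$ is contained in at most one block. An independent set is a subset $Y\subseteq X$ containing no block. Let $\mathbb{Z}_n=\{0,\ldots,n-1\}$ be the cyclic group of order $n$. A sequencing is a bijection $\varphi:\mathbb{Z}_n\to X$. A set $S\subseteq X$ is cyclically consecutive if $S=\{\varphi(i),\varphi(i+1),\ldots,\varphi(i+|S|-1)\}$ for some $i\in\mathbb{Z}_n$ (addition in $\mathbb{Z}_n$). For a positive integer $\ell$, a sequencing is cyclically $\ell$-good if every set of $\ell$ cyclically consecutive vertices is an independent set. *)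

theory Defs
  imports Complex_Main
begin

definition partial_STS :: "'a set \<Rightarrow> 'a set set \<Rightarrow> bool" where
  "partial_STS X \<B> \<longleftrightarrow> finite X \<and> card X \<ge> 3 \<and>
     (\<forall>b\<in>\<B>. b \<subseteq> X \<and> card b = 3) \<and>
     (\<forall>P. P \<subseteq> X \<and> card P = 2 \<longrightarrow> card {b\<in>\<B>. P \<subseteq> b} \<le> 1)"

definition independent_set :: "'a set set \<Rightarrow> 'a set \<Rightarrow> bool" where
  "independent_set \<B> Y \<longleftrightarrow> (\<forall>b\<in>\<B>. \<not> b \<subseteq> Y)"

definition sequencing :: "'a set \<Rightarrow> (nat \<Rightarrow> 'a) \<Rightarrow> bool" where
  "sequencing X \<phi> \<longleftrightarrow> bij_betw \<phi> {0..<card X} X"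

definition cyc_window :: "nat \<Rightarrow> (nat \<Rightarrow> 'a) \<Rightarrow> nat \<Rightarrow> nat \<Rightarrow> 'a set" where
  "cyc_window n \<phi> i l = {\<phi> ((i + j) mod n) | j. j < l}"

definition cyclically_good :: "'a set \<Rightarrow> 'a set set \<Rightarrow> nat \<Rightarrow> (nat \<Rightarrow> 'a) \<Rightarrow> bool" where
  "cyclically_good X \<B> l \<phi> \<longleftrightarrow> sequencing X \<phi> \<and>
     (\<forall>i < card X. independent_set \<B> (cyc_window (card X) \<phi> i l))"

end

theory Submission
  imports Defs "HOL-Library.FuncSet"
begin

definition Av :: "'s set \<Rightarrow> ('e \<Rightarrow> 's set) \<Rightarrow> 'e set \<Rightarrow> 's set" where
  "Av \<Omega> A S = {s \<in> \<Omega>. \<forall>j\<in>S. s \<notin> A j}"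

lemma Av_mono: "S \<subseteq> T \<Longrightarrow> Av \<Omega> A T \<subseteq> Av \<Omega> A S"
  unfolding Av_def by auto

lemma Av_insert: "Av \<Omega> A (insert j S) = Av \<Omega> A S - A j"
  unfolding Av_def by auto

lemma lll_step:
  fixes \<Omega> :: "'s set" and I :: "'e set" and A :: "'e \<Rightarrow> 's set" and N :: "'e \<Rightarrow> 'e set"
    and p :: real and d :: nat
  assumes fin: "finite \<Omega>" and finI: "finite I"
    and Nd: "\<And>i. i \<in> I \<Longrightarrow> card (N i \<inter> I) \<le> d"
    and neg: "\<And>i S. i \<in> I \<Longrightarrow> S \<subseteq> I \<Longrightarrow> i \<notin> S \<Longrightarrow> S \<inter> N i = {} \<Longrightarrow>
        real (card (A i \<inter> Av \<Omega> A S)) \<le> p * real (card (Av \<Omega> A S))"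
    and pd: "4 * p * real d \<le> 1" and p0: "0 \<le> p"
  shows "S \<subseteq> I \<Longrightarrow> i \<in> I \<Longrightarrow> i \<notin> S \<Longrightarrow>
     real (card (A i \<inter> Av \<Omega> A S)) \<le> 2 * p * real (card (Av \<Omega> A S))"
proof (induction "card S" arbitrary: S i rule: less_induct)
  case less
  define S1 where "S1 = S \<inter> N i"
  define S2 where "S2 = S - N i"
  have finS: "finite S" using finite_subset[OF less.prems(1) finI] .
  have S12: "S = S2 \<union> S1" unfolding S1_def S2_def by auto
  have key: "T \<subseteq> S1 \<Longrightarrow> real (card (Av \<Omega> A (S2 \<union> T))) \<ge>
      (1 - 2 * p * real (card T)) * real (card (Av \<Omega> A S2))" for T
  proof -
    assume TS: "T \<subseteq> S1"
    have "finite S1" unfolding S1_def using finS by simp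
    hence "finite T" using finite_subset[OF TS] by blast
    then show ?thesis using TS
    proof (induction T rule: finite_induct)
      case empty
      then show ?case by simp
    next
      case (insert j T)
      have jS1: "j \<in> S1" and TS1: "T \<subseteq> S1" using insert by auto
      have IH: "real (card (Av \<Omega> A (S2 \<union> T))) \<ge> (1 - 2 * p * real (card T)) * real (card (Av \<Omega> A S2))"
        using insert.IH[OF TS1] .
      define S' where "S' = S2 \<union> T"
      have S'sub: "S' \<subseteq> S - {j}" unfolding S'_def using TS1 jS1 insert(2) S1_def S2_def by auto
      have jS: "j \<in> S" using jS1 S1_def by auto
      have "card S' < card S"
        proof -
        have "card S' \<le> card (S - {j})" using S'sub finS by (intro card_mono) auto
        also have "\<dots> < card S" using finS jS by (rule card_Diff1_less)
        finally show ?thesis .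
      qed
      moreover have "S' \<subseteq> I" using S'sub less.prems(1) by auto
      moreover have "j \<in> I" using jS less.prems(1) by auto
      moreover have "j \<notin> S'" using S'sub by auto
      ultimately have bj: "real (card (A j \<inter> Av \<Omega> A S')) \<le> 2 * p * real (card (Av \<Omega> A S'))"
        by (rule less.hyps)
      have "Av \<Omega> A S' \<subseteq> Av \<Omega> A S2" unfolding S'_def by (rule Av_mono) auto
      moreover have "finite (Av \<Omega> A S2)" using fin unfolding Av_def by auto
      ultimately have c1: "card (Av \<Omega> A S') \<le> card (Av \<Omega> A S2)"
        by (simp add: card_mono)
      have eq: "Av \<Omega> A (S2 \<union> insert j T) = Av \<Omega> A S' - (A j \<inter> Av \<Omega> A S')"
        unfolding S'_def Av_def by auto
      have finAv: "finite (Av \<Omega> A S')" using fin unfolding Av_def by auto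
      have "card (Av \<Omega> A (S2 \<union> insert j T)) = card (Av \<Omega> A S') - card (A j \<inter> Av \<Omega> A S')"
        unfolding eq by (rule card_Diff_subset) (use finAv in auto)
      moreover have "card (A j \<inter> Av \<Omega> A S') \<le> card (Av \<Omega> A S')"
        using finAv by (simp add: card_mono)
      ultimately have e1: "real (card (Av \<Omega> A (S2 \<union> insert j T))) =
          real (card (Av \<Omega> A S')) - real (card (A j \<inter> Av \<Omega> A S'))" by simp
      have e2: "real (card (Av \<Omega> A S')) - real (card (A j \<inter> Av \<Omega> A S')) \<ge> real (card (Av \<Omega> A S')) - 2 * p * real (card (Av \<Omega> A S2))"
        proof -
        have "2 * p * real (card (Av \<Omega> A S')) \<le> 2 * p * real (card (Av \<Omega> A S2))"
          using c1 p0 by (intro mult_left_mono) auto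
        thus ?thesis using bj by linarith
      qed
      have "real (card (Av \<Omega> A (S2 \<union> insert j T))) \<ge>
         (1 - 2 * p * real (card T)) * real (card (Av \<Omega> A S2)) - 2 * p * real (card (Av \<Omega> A S2))"
        using IH e1 e2 unfolding S'_def by linarith
      then show ?case using insert(1,2) by (simp add: algebra_simps)
    qed
  qed
  have "card S1 \<le> d"
  proof -
    have "S1 \<subseteq> N i \<inter> I" unfolding S1_def using less.prems(1) by auto
    hence "card S1 \<le> card (N i \<inter> I)" using finI by (simp add: card_mono)
    thus ?thesis using Nd less.prems(2) by fastforce
  qed
  hence "2 * p * real (card S1) \<le> 1/2" proof -
    have "2 * p * real (card S1) \<le> 2 * p * real d" using \<open>card S1 \<le> d\<close> p0 by (intro mult_left_mono) auto
    thus ?thesis using pd by linarith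
  qed
  hence half: "real (card (Av \<Omega> A S)) \<ge> 1/2 * real (card (Av \<Omega> A S2))"
    proof -
    have "(1/2) * real (card (Av \<Omega> A S2)) \<le> (1 - 2 * p * real (card S1)) * real (card (Av \<Omega> A S2))"
      using \<open>2 * p * real (card S1) \<le> 1/2\<close> by (intro mult_right_mono) auto
    also have "\<dots> \<le> real (card (Av \<Omega> A S))" using key[of S1] S12 by simp
    finally show ?thesis .
  qed
  have n2: "real (card (A i \<inter> Av \<Omega> A S2)) \<le> p * real (card (Av \<Omega> A S2))"
    apply (rule neg) using less.prems unfolding S2_def by auto
  have "Av \<Omega> A S \<subseteq> Av \<Omega> A S2" by (rule Av_mono) (auto simp: S2_def)
  hence "card (A i \<inter> Av \<Omega> A S) \<le> card (A i \<inter> Av \<Omega> A S2)"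
    using fin unfolding Av_def by (intro card_mono) auto
  hence "real (card (A i \<inter> Av \<Omega> A S)) \<le> p * real (card (Av \<Omega> A S2))" using n2 by linarith
  also have "\<dots> \<le> 2 * p * real (card (Av \<Omega> A S))" proof -
    have "real (card (Av \<Omega> A S2)) \<le> 2 * real (card (Av \<Omega> A S))" using half by linarith
    hence "p * real (card (Av \<Omega> A S2)) \<le> p * (2 * real (card (Av \<Omega> A S)))" using p0 by (rule mult_left_mono)
    thus ?thesis by (simp add: algebra_simps)
  qed
  finally show ?case .
qed

lemma lll:
  fixes \<Omega> :: "'s set" and I :: "'e set" and A :: "'e \<Rightarrow> 's set" and N :: "'e \<Rightarrow> 'e set"
    and p :: real and d :: nat
  assumes fin: "finite \<Omega>" and finI: "finite I" and ne: "\<Omega> \<noteq> {}"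
    and Nd: "\<And>i. i \<in> I \<Longrightarrow> card (N i \<inter> I) \<le> d"
    and neg: "\<And>i S. i \<in> I \<Longrightarrow> S \<subseteq> I \<Longrightarrow> i \<notin> S \<Longrightarrow> S \<inter> N i = {} \<Longrightarrow>
        real (card (A i \<inter> Av \<Omega> A S)) \<le> p * real (card (Av \<Omega> A S))"
    and pd: "4 * p * real d \<le> 1" and p0: "0 \<le> p" and p1: "p < 1/2"
  shows "\<exists>s\<in>\<Omega>. \<forall>i\<in>I. s \<notin> A i"
proof -
  note st = lll_step[OF fin finI Nd neg pd p0]
  have "T \<subseteq> I \<Longrightarrow> card (Av \<Omega> A T) > 0" for T
  proof -
    assume TI: "T \<subseteq> I"
    have "finite T" using finite_subset[OF TI finI] .
    then show ?thesis using TI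
    proof (induction T rule: finite_induct)
      case empty
      then show ?case using fin ne by (simp add: Av_def card_gt_0_iff)
    next
      case (insert j T)
      have finAv: "finite (Av \<Omega> A T)" using fin unfolding Av_def by auto
      have b: "real (card (A j \<inter> Av \<Omega> A T)) \<le> 2 * p * real (card (Av \<Omega> A T))"
        using insert.prems insert.hyps by (intro st) auto
      have eq: "Av \<Omega> A (insert j T) = Av \<Omega> A T - (A j \<inter> Av \<Omega> A T)"
        unfolding Av_def by auto
      have "card (Av \<Omega> A (insert j T)) = card (Av \<Omega> A T) - card (A j \<inter> Av \<Omega> A T)"
        unfolding eq by (rule card_Diff_subset) (use finAv in auto)
      moreover have "real (card (A j \<inter> Av \<Omega> A T)) < real (card (Av \<Omega> A T))"
        proof -
        have pos: "real (card (Av \<Omega> A T)) > 0" using insert by simp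
        have "2 * p < 1" using p1 by simp
        hence "2 * p * real (card (Av \<Omega> A T)) < 1 * real (card (Av \<Omega> A T))"
          using pos by (intro mult_strict_right_mono) auto
        thus ?thesis using b by simp
      qed
      ultimately show ?case by simp
    qed
  qed
  from this[of I] have "Av \<Omega> A I \<noteq> {}" by auto
  thus ?thesis unfolding Av_def by auto
qed


definition win :: "nat \<Rightarrow> nat \<Rightarrow> nat \<Rightarrow> nat set" where
  "win n l i = {(i + j) mod n | j. j < l}"

definition Om :: "'a set \<Rightarrow> (nat \<Rightarrow> 'a) set" where
  "Om X = {\<phi> \<in> {0..<card X} \<rightarrow>\<^sub>E X. bij_betw \<phi> {0..<card X} X}"

definition Gs :: "nat \<Rightarrow> nat \<Rightarrow> 'a set \<Rightarrow> ('a \<Rightarrow> nat) set" where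
  "Gs n l b = {g \<in> b \<rightarrow>\<^sub>E {0..<n}. inj_on g b \<and> (\<exists>i<n. g ` b \<subseteq> win n l i)}"

definition EA :: "'a set \<Rightarrow> ('a set \<times> ('a \<Rightarrow> nat)) \<Rightarrow> (nat \<Rightarrow> 'a) set" where
  "EA X e = {\<phi> \<in> Om X. \<forall>x\<in>fst e. \<phi> (snd e x) = x}"

definition conf :: "('a set \<times> ('a \<Rightarrow> nat)) \<Rightarrow> ('a set \<times> ('a \<Rightarrow> nat)) set" where
  "conf e = {e'. \<exists>x\<in>fst e. \<exists>x'\<in>fst e'. (snd e x = snd e' x') \<noteq> (x = x')}"

lemma perm_exists:
  assumes finX: "finite X" and bX: "b \<subseteq> X" and rinj: "inj_on \<rho> b" and rX: "\<rho> ` b \<subseteq> X"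
  shows "\<exists>\<pi>. bij_betw \<pi> X X \<and> (\<forall>x\<in>b. \<pi> x = \<rho> x) \<and> (\<forall>y\<in>X-b. \<pi> y \<notin> b \<longrightarrow> \<pi> y = y)"
proof -
  define F where "F = \<rho> ` b"
  have finb: "finite b" using finX bX finite_subset by blast
  have finF: "finite F" unfolding F_def using finb by simp
  have cF: "card F = card b" unfolding F_def using rinj by (simp add: card_image)
  have "card (F - b) = card F - card (F \<inter> b)" using finF by (simp add: card_Diff_subset_Int)
  moreover have "card (b - F) = card b - card (b \<inter> F)" using finb by (simp add: card_Diff_subset_Int)
  ultimately have "card (F - b) = card (b - F)" using cF by (simp add: Int_commute)
  then obtain h where h: "bij_betw h (F - b) (b - F)"
    using finF finb by (metis finite_Diff finite_same_card_bij)
  define \<pi> where "\<pi> y = (if y \<in> b then \<rho> y else if y \<in> F then h y else y)" for y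
  have hF: "h y \<in> b - F" if "y \<in> F - b" for y using h that bij_betwE by blast
  have hinj: "inj_on h (F - b)" using h bij_betw_def by blast
  have inj: "inj_on \<pi> X"
  proof (rule inj_onI)
    fix y1 y2 assume y1: "y1 \<in> X" and y2: "y2 \<in> X" and eq: "\<pi> y1 = \<pi> y2"
    have r1: "\<rho> y \<in> F" if "y \<in> b" for y using that F_def by auto
    show "y1 = y2"
    proof (cases "y1 \<in> b")
      case True
      note t1 = True
      show ?thesis
      proof (cases "y2 \<in> b")
        case True
        then show ?thesis using t1 eq rinj unfolding \<pi>_def by (simp add: inj_on_def)
      next
        case False
        then show ?thesis using t1 eq r1[OF t1] hF[of y2] unfolding \<pi>_def by (auto split: if_splits)
      qed
    next
      case False
      note f1 = False
      show ?thesis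
      proof (cases "y2 \<in> b")
        case True
        then show ?thesis using f1 eq r1[OF True] hF[of y1] unfolding \<pi>_def by (auto split: if_splits)
      next
        case False
        then show ?thesis using f1 eq hF[of y1] hF[of y2] hinj unfolding \<pi>_def
          by (auto split: if_splits simp: inj_on_def)
      qed
    qed
  qed
  have sub: "\<pi> ` X \<subseteq> X"
  proof
    fix z assume "z \<in> \<pi> ` X"
    then obtain y where y: "y \<in> X" "z = \<pi> y" by auto
    show "z \<in> X" using y rX bX hF[of y] unfolding \<pi>_def F_def by (auto split: if_splits)
  qed
  have "\<pi> ` X = X" using endo_inj_surj[OF finX sub inj] .
  hence bij: "bij_betw \<pi> X X" using inj by (simp add: bij_betw_def)
  moreover have "\<forall>x\<in>b. \<pi> x = \<rho> x" unfolding \<pi>_def by simp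
  moreover have "\<forall>y\<in>X-b. \<pi> y \<notin> b \<longrightarrow> \<pi> y = y"
    using hF unfolding \<pi>_def by auto
  ultimately show ?thesis by blast
qed

lemma Om_ext: "\<sigma> \<in> Om X \<Longrightarrow> q \<notin> {0..<card X} \<Longrightarrow> \<sigma> q = undefined"
  unfolding Om_def by (auto simp: PiE_def extensional_def)

lemma negdep:
  assumes finX: "finite X" and bX: "b \<subseteq> X" and gP: "g ` b \<subseteq> {0..<card X}" and ginj: "inj_on g b"
    and noconf: "\<And>e'. e' \<in> S \<Longrightarrow> \<forall>x\<in>b. \<forall>x'\<in>fst e'. (g x = snd e' x') = (x = x')"
  shows "card (EA X (b,g) \<inter> Av (Om X) (EA X) S) * card {f \<in> g`b \<rightarrow>\<^sub>E X. inj_on f (g`b)}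
     \<le> card (Av (Om X) (EA X) S)"
proof -
  define n where "n = card X"
  define P where "P = {0..<n}"
  define D where "D = g ` b"
  define F where "F = {f \<in> D \<rightarrow>\<^sub>E X. inj_on f D}"
  define pf where "pf f = (SOME \<pi>. bij_betw \<pi> X X \<and> (\<forall>x\<in>b. \<pi> x = f (g x)) \<and>
      (\<forall>y\<in>X-b. \<pi> y \<notin> b \<longrightarrow> \<pi> y = y))" for f
  have pf: "bij_betw (pf f) X X \<and> (\<forall>x\<in>b. pf f x = f (g x)) \<and> (\<forall>y\<in>X-b. pf f y \<notin> b \<longrightarrow> pf f y = y)"
    if fF: "f \<in> F" for f
  proof -
    have "inj_on (f \<circ> g) b" using fF ginj unfolding F_def D_def by (auto intro: comp_inj_on)
    moreover have "(f \<circ> g) ` b \<subseteq> X" using fF unfolding F_def D_def by auto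
    ultimately have "\<exists>\<pi>. bij_betw \<pi> X X \<and> (\<forall>x\<in>b. \<pi> x = (f \<circ> g) x) \<and> (\<forall>y\<in>X-b. \<pi> y \<notin> b \<longrightarrow> \<pi> y = y)"
      using perm_exists[OF finX bX] by blast
    hence "\<exists>\<pi>. bij_betw \<pi> X X \<and> (\<forall>x\<in>b. \<pi> x = f (g x)) \<and> (\<forall>y\<in>X-b. \<pi> y \<notin> b \<longrightarrow> \<pi> y = y)"
      by simp
    thus ?thesis unfolding pf_def by (rule someI_ex)
  qed
  define \<Psi> where "\<Psi> = (\<lambda>(\<sigma>::nat \<Rightarrow> 'a, f::nat \<Rightarrow> 'a). restrict (pf f \<circ> \<sigma>) P)"
  define L where "L = EA X (b,g) \<inter> Av (Om X) (EA X) S"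
  have LOm: "\<sigma> \<in> Om X" if "\<sigma> \<in> L" for \<sigma> using that unfolding L_def EA_def by auto
  have Lb: "\<sigma> (g x) = x" if "\<sigma> \<in> L" "x \<in> b" for \<sigma> x using that unfolding L_def EA_def by auto
  have Omb: "bij_betw \<sigma> P X" if "\<sigma> \<in> Om X" for \<sigma> using that unfolding Om_def P_def n_def by auto
  have OmX: "\<sigma> i \<in> X" if "\<sigma> \<in> Om X" "i \<in> P" for \<sigma> i
    using Omb[OF that(1)] that(2) bij_betwE by blast
  have finOm: "finite (Om X)" unfolding Om_def using finX by (auto intro: finite_subset[OF _ finite_PiE])
  have img: "\<Psi> ` (L \<times> F) \<subseteq> Av (Om X) (EA X) S"
  proof
    fix \<tau> assume "\<tau> \<in> \<Psi> ` (L \<times> F)"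
    then obtain \<sigma> f where sL: "\<sigma> \<in> L" and fF: "f \<in> F" and tau: "\<tau> = restrict (pf f \<circ> \<sigma>) P"
      unfolding \<Psi>_def by auto
    have sOm: "\<sigma> \<in> Om X" using LOm[OF sL] .
    note pff = pf[OF fF]
    have bijt: "bij_betw \<tau> P X"
    proof -
      have "bij_betw (pf f \<circ> \<sigma>) P X" using Omb[OF sOm] pff bij_betw_trans by blast
      moreover have "\<And>i. i \<in> P \<Longrightarrow> \<tau> i = (pf f \<circ> \<sigma>) i" using tau by simp
      ultimately show ?thesis using bij_betw_cong by blast
    qed
    have tOm: "\<tau> \<in> Om X"
    proof -
      have "\<tau> \<in> P \<rightarrow>\<^sub>E X" using bijt tau by (auto simp: bij_betw_def)
      thus ?thesis using bijt unfolding Om_def P_def n_def by auto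
    qed
    have "\<tau> \<notin> EA X e'" if eS: "e' \<in> S" for e'
    proof
      assume "\<tau> \<in> EA X e'"
      hence te: "\<tau> (snd e' x') = x'" if "x' \<in> fst e'" for x' using that unfolding EA_def by auto
      have "\<sigma> (snd e' x') = x'" if x'b: "x' \<in> fst e'" for x'
      proof (cases "snd e' x' \<in> P")
        case False
        then show ?thesis using te[OF x'b] tau Om_ext[OF sOm] unfolding P_def n_def by auto
      next
        case qP: True
        show ?thesis
        proof (cases "snd e' x' \<in> g ` b")
          case True
          then obtain x where xb: "x \<in> b" and gx: "g x = snd e' x'" by auto
          have "x = x'" using noconf[OF eS] xb x'b gx by blast
          then show ?thesis using Lb[OF sL xb] gx by simp
        next
          case False
          define y where "y = \<sigma> (snd e' x')"
          have yX: "y \<in> X" unfolding y_def using OmX[OF sOm qP] .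
          have ynb: "y \<notin> b"
          proof
            assume yb: "y \<in> b"
            have "\<sigma> (g y) = y" using Lb[OF sL yb] .
            moreover have "g y \<in> P" using gP yb unfolding P_def n_def by auto
            moreover have "inj_on \<sigma> P" using Omb[OF sOm] bij_betw_def by blast
            ultimately have "g y = snd e' x'" using qP unfolding y_def by (metis inj_onD)
            thus False using False yb by (metis imageI)
          qed
          have x'nb: "x' \<notin> b"
          proof
            assume "x' \<in> b"
            hence "g x' = snd e' x'" using noconf[OF eS] x'b by blast
            thus False using False \<open>x' \<in> b\<close> by (metis imageI)
          qed
          have "pf f y = x'" using te[OF x'b] tau qP unfolding y_def by simp
          hence "pf f y = y" using pff yX ynb x'nb by auto
          thus ?thesis using \<open>pf f y = x'\<close> unfolding y_def by simp
        qed
      qed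
      hence "\<sigma> \<in> EA X e'" using sOm unfolding EA_def by auto
      moreover have "\<sigma> \<in> Av (Om X) (EA X) S" using sL unfolding L_def by auto
      ultimately show False using eS unfolding Av_def by auto
    qed
    thus "\<tau> \<in> Av (Om X) (EA X) S" using tOm unfolding Av_def by auto
  qed
  have inj: "inj_on \<Psi> (L \<times> F)"
  proof (rule inj_onI)
    fix a1 a2 assume a1: "a1 \<in> L \<times> F" and a2: "a2 \<in> L \<times> F" and eq: "\<Psi> a1 = \<Psi> a2"
    obtain \<sigma>1 f1 where a1e: "a1 = (\<sigma>1, f1)" by fastforce
    obtain \<sigma>2 f2 where a2e: "a2 = (\<sigma>2, f2)" by fastforce
    have s1: "\<sigma>1 \<in> L" "f1 \<in> F" and s2: "\<sigma>2 \<in> L" "f2 \<in> F" using a1 a2 a1e a2e by auto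
    have eq': "restrict (pf f1 \<circ> \<sigma>1) P = restrict (pf f2 \<circ> \<sigma>2) P" using eq a1e a2e unfolding \<Psi>_def by simp
    have val: "pf f1 (\<sigma>1 i) = pf f2 (\<sigma>2 i)" if "i \<in> P" for i
      using fun_cong[OF eq', of i] that by simp
    have "f1 q = f2 q" if "q \<in> D" for q
    proof -
      obtain x where xb: "x \<in> b" and q: "q = g x" using \<open>q \<in> D\<close> unfolding D_def by auto
      have qP: "q \<in> P" using gP xb q unfolding P_def n_def by auto
      have "pf f1 (\<sigma>1 q) = f1 q" using pf[OF s1(2)] Lb[OF s1(1) xb] xb q by simp
      moreover have "pf f2 (\<sigma>2 q) = f2 q" using pf[OF s2(2)] Lb[OF s2(1) xb] xb q by simp
      ultimately show ?thesis using val[OF qP] by simp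
    qed
    hence feq: "f1 = f2" using s1(2) s2(2) unfolding F_def
      by (auto intro!: extensionalityI[where A=D] simp: PiE_def)
    have "\<sigma>1 i = \<sigma>2 i" for i
    proof (cases "i \<in> P")
      case True
      have "inj_on (pf f1) X" using pf[OF s1(2)] bij_betw_def by blast
      moreover have "\<sigma>1 i \<in> X" "\<sigma>2 i \<in> X" using OmX LOm s1(1) s2(1) True by auto
      ultimately show ?thesis using val[OF True] feq by (metis inj_onD)
    next
      case False
      then show ?thesis using Om_ext LOm s1(1) s2(1) unfolding P_def n_def by metis
    qed
    thus "a1 = a2" using a1e a2e feq by auto
  qed
  have finAv: "finite (Av (Om X) (EA X) S)" using finOm unfolding Av_def by auto
  have "card (L \<times> F) \<le> card (Av (Om X) (EA X) S)" using card_inj_on_le[OF inj img finAv] .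
  moreover have "card (L \<times> F) = card L * card F" by (rule card_cartesian_product)
  ultimately show ?thesis unfolding L_def F_def D_def by simp
qed


lemma pSTS_D:
  assumes "partial_STS X B"
  shows "finite X" "card X \<ge> 3" "\<And>b. b \<in> B \<Longrightarrow> b \<subseteq> X \<and> card b = 3"
    "\<And>P. P \<subseteq> X \<Longrightarrow> card P = 2 \<Longrightarrow> card {b\<in>B. P \<subseteq> b} \<le> 1"
  using assms unfolding partial_STS_def by blast+

lemma good_of_avoid:
  assumes pSTS: "partial_STS X B" and phi: "\<phi> \<in> Om X"
    and avoid: "\<forall>e\<in>Sigma B (Gs (card X) l). \<phi> \<notin> EA X e"
  shows "cyclically_good X B l \<phi>"
proof -
  define n where "n = card X"
  define P where "P = {0..<n}"
  have "card X \<ge> 3" using pSTS unfolding partial_STS_def by blast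
  hence n0: "n > 0" unfolding n_def by simp
  have bij: "bij_betw \<phi> P X" using phi unfolding Om_def P_def n_def by (simp only: mem_Collect_eq)
  have injp: "inj_on \<phi> P" using bij by (simp add: bij_betw_def)
  have "independent_set B (cyc_window n \<phi> i l)" if iP: "i < n" for i
    unfolding independent_set_def
  proof
    fix b assume bB: "b \<in> B"
    show "\<not> b \<subseteq> cyc_window n \<phi> i l"
    proof
      assume bW: "b \<subseteq> cyc_window n \<phi> i l"
      define g where "g = restrict (inv_into P \<phi>) b"
      have xw: "\<exists>j<l. x = \<phi> ((i + j) mod n)" if "x \<in> b" for x
        using bW that unfolding cyc_window_def by auto
      have gx: "g x \<in> P \<and> \<phi> (g x) = x \<and> g x \<in> win n l i" if xb: "x \<in> b" for x
      proof -
        obtain j where j: "j < l" "x = \<phi> ((i + j) mod n)" using xw[OF xb] by blast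
        have qP: "(i + j) mod n \<in> P" unfolding P_def using n0 by auto
        have "inv_into P \<phi> x = (i + j) mod n" using j(2) qP injp by (simp add: inv_into_f_f)
        moreover have "g x = inv_into P \<phi> x" unfolding g_def using xb by simp
        moreover have "(i + j) mod n \<in> win n l i" unfolding win_def using j(1) by blast
        ultimately show ?thesis using qP j(2) by simp
      qed
      have "g \<in> Gs n l b"
        unfolding Gs_def
      proof (intro CollectI conjI)
        have "g x \<in> {0..<n}" if "x \<in> b" for x using gx[OF that] unfolding P_def by blast
        thus "g \<in> b \<rightarrow>\<^sub>E {0..<n}" unfolding g_def PiE_def extensional_def by auto
        show "inj_on g b"
        proof (rule inj_onI)
          fix x y assume "x \<in> b" "y \<in> b" "g x = g y"
          thus "x = y" using gx[of x] gx[of y] by metis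
        qed
        have "g ` b \<subseteq> win n l i" using gx by blast
        thus "\<exists>i<n. g ` b \<subseteq> win n l i" using iP by blast
      qed
      hence "(b, g) \<in> Sigma B (Gs (card X) l)" using bB n_def by auto
      moreover have "\<phi> \<in> EA X (b, g)" unfolding EA_def using phi gx by simp
      ultimately show False using avoid by blast
    qed
  qed
  moreover have "sequencing X \<phi>" using bij unfolding sequencing_def P_def n_def .
  ultimately show ?thesis unfolding cyclically_good_def n_def[symmetric] by blast
qed

definition Nb :: "nat \<Rightarrow> nat \<Rightarrow> nat \<Rightarrow> nat set" where
  "Nb n l Q = (\<lambda>k. (Q + n - (l - 1) + k) mod n) ` {0..<2*l-1}"

lemma win_Nb:
  assumes l1: "1 \<le> l" and ln: "l \<le> n" and Q: "Q \<in> win n l i" and R: "R \<in> win n l i"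
  shows "R \<in> Nb n l Q"
proof -
  obtain a where a: "a < l" "Q = (i + a) mod n" using Q unfolding win_def by auto
  obtain c where c: "c < l" "R = (i + c) mod n" using R unfolding win_def by auto
  define k where "k = c + (l - 1) - a"
  have k: "k < 2*l-1" unfolding k_def using a c by auto
  have "Q + n - (l - 1) + k = Q + (n + c - a)" unfolding k_def using a c ln by auto
  hence "(Q + n - (l - 1) + k) mod n = ((i + a) mod n + (n + c - a)) mod n" using a by simp
  also have "\<dots> = (i + a + (n + c - a)) mod n" by (simp add: mod_add_left_eq)
  also have "i + a + (n + c - a) = (i + c) + n" using a c ln by auto
  also have "(i + c + n) mod n = R" using c by simp
  finally show ?thesis unfolding Nb_def using k by (auto intro!: image_eqI[where x=k])
qed

lemma card_Nb: "card (Nb n l Q) \<le> 2*l-1"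
proof -
  have "card (Nb n l Q) \<le> card {0..<2*l-1}" unfolding Nb_def by (rule card_image_le) simp
  thus ?thesis by simp
qed

lemma card_fix:
  assumes finb: "finite b'" and yb: "y \<in> b'" and c3: "card b' = 3" and l1: "1 \<le> l" and ln: "l \<le> n"
  shows "card {g' \<in> Gs n l b'. g' y = Q} \<le> (2*l-1)^2"
proof -
  define T where "T z = (if z = y then {Q} else Nb n l Q)" for z
  have sub: "{g' \<in> Gs n l b'. g' y = Q} \<subseteq> PiE b' T"
  proof
    fix g' assume "g' \<in> {g' \<in> Gs n l b'. g' y = Q}"
    hence g': "g' \<in> b' \<rightarrow>\<^sub>E {0..<n}" "\<exists>i<n. g' ` b' \<subseteq> win n l i" "g' y = Q"
      unfolding Gs_def by auto
    obtain i where i: "g' ` b' \<subseteq> win n l i" using g'(2) by blast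
    have "g' z \<in> T z" if "z \<in> b'" for z
    proof (cases "z = y")
      case True then show ?thesis using g'(3) unfolding T_def by simp
    next
      case False
      have "g' z \<in> Nb n l Q" using win_Nb[OF l1 ln, of Q i "g' z"] i that yb g'(3) by auto
      thus ?thesis using False unfolding T_def by simp
    qed
    thus "g' \<in> PiE b' T" using g'(1) by (auto simp: PiE_def)
  qed
  have finT: "finite (PiE b' T)" using finb unfolding T_def Nb_def by (auto intro!: finite_PiE)
  have "card (PiE b' T) = (\<Prod>z\<in>b'. card (T z))" using finb by (rule card_PiE)
  also have "\<dots> = card (T y) * (\<Prod>z\<in>b' - {y}. card (T z))" using finb yb by (rule prod.remove)
  also have "(\<Prod>z\<in>b' - {y}. card (T z)) = (\<Prod>z\<in>b' - {y}. card (Nb n l Q))"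
    unfolding T_def by (rule prod.cong) auto
  also have "\<dots> = card (Nb n l Q) ^ card (b' - {y})" by simp
  also have "card (b' - {y}) = 2" using c3 yb finb by simp
  finally have "card (PiE b' T) = card (Nb n l Q) ^ 2" unfolding T_def by simp
  also have "\<dots> \<le> (2*l-1)^2" using card_Nb by (rule power_mono) simp
  finally have "card (PiE b' T) \<le> (2*l-1)^2" .
  moreover have "card {g' \<in> Gs n l b'. g' y = Q} \<le> card (PiE b' T)" using card_mono[OF finT sub] .
  ultimately show ?thesis by linarith
qed

lemma finite_B: "partial_STS X B \<Longrightarrow> finite B"
proof -
  assume a: "partial_STS X B"
  have "B \<subseteq> Pow X" using pSTS_D(3)[OF a] by blast
  thus "finite B" using pSTS_D(1)[OF a] by (simp add: finite_subset)
qed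

lemma card_Bx:
  assumes pSTS: "partial_STS X B"
  shows "card {b'\<in>B. y \<in> b'} \<le> card X - 1"
proof (cases "y \<in> X")
  case False
  hence "{b'\<in>B. y \<in> b'} = {}" using pSTS_D(3)[OF pSTS] by blast
  hence "card {b'\<in>B. y \<in> b'} = 0" by (simp only: card.empty)
  then show ?thesis by simp
next
  case yX: True
  have finX: "finite X" using pSTS_D(1)[OF pSTS] .
  have finB: "finite B" using finite_B[OF pSTS] .
  have bprop: "b \<subseteq> X \<and> card b = 3" if "b \<in> B" for b using pSTS_D(3)[OF pSTS that] .
  define c where "c b = (SOME z. z \<in> b \<and> z \<noteq> y)" for b
  have cb: "c b \<in> b \<and> c b \<noteq> y" if "b \<in> B" for b
  proof -
    have "card b = 3" using bprop[OF that] by simp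
    have "b - {y} \<noteq> {}"
    proof
      assume "b - {y} = {}"
      hence "b \<subseteq> {y}" by auto
      hence "card b \<le> card {y}" by (intro card_mono) auto
      thus False using \<open>card b = 3\<close> by simp
    qed
    hence "\<exists>z. z \<in> b \<and> z \<noteq> y" by auto
    thus ?thesis unfolding c_def by (rule someI_ex)
  qed
  have inj: "inj_on c {b'\<in>B. y \<in> b'}"
  proof (rule inj_onI)
    fix b1 b2 assume b1: "b1 \<in> {b'\<in>B. y \<in> b'}" and b2: "b2 \<in> {b'\<in>B. y \<in> b'}" and eq: "c b1 = c b2"
    define Pr where "Pr = {y, c b1}"
    have "b1 \<subseteq> X" using bprop b1 by blast
    hence PX: "Pr \<subseteq> X" using b1 cb[of b1] unfolding Pr_def by blast
    have "c b1 \<noteq> y" using b1 cb by blast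
    hence Pc: "card Pr = 2" unfolding Pr_def by simp
    have c1: "card {b\<in>B. Pr \<subseteq> b} \<le> 1" using pSTS_D(4)[OF pSTS PX Pc] .
    have i1: "c b1 \<in> b1" using b1 cb by blast
    have "c b2 \<in> b2" using b2 cb by blast
    hence i2: "c b1 \<in> b2" using eq by simp
    have "b1 \<in> {b\<in>B. Pr \<subseteq> b}" "b2 \<in> {b\<in>B. Pr \<subseteq> b}"
      using b1 b2 i1 i2 unfolding Pr_def by auto
    moreover have "finite {b\<in>B. Pr \<subseteq> b}" using finB by auto
    hence "\<forall>a1\<in>{b\<in>B. Pr \<subseteq> b}. \<forall>a2\<in>{b\<in>B. Pr \<subseteq> b}. a1 = a2"
      using c1 card_le_Suc0_iff_eq by (metis One_nat_def)
    ultimately show "b1 = b2" by blast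
  qed
  have "c ` {b'\<in>B. y \<in> b'} \<subseteq> X - {y}"
  proof
    fix z assume "z \<in> c ` {b'\<in>B. y \<in> b'}"
    then obtain b where b: "b \<in> B" "z = c b" by blast
    show "z \<in> X - {y}" using cb[OF b(1)] bprop[OF b(1)] b(2) by blast
  qed
  moreover have "finite (X - {y})" using finX by simp
  ultimately have "card {b'\<in>B. y \<in> b'} \<le> card (X - {y})"
    using card_inj_on_le[OF inj] by blast
  thus ?thesis using yX finX by simp
qed

lemma finite_Gs: "finite b \<Longrightarrow> finite (Gs n l b)"
  unfolding Gs_def by (rule finite_subset[of _ "b \<rightarrow>\<^sub>E {0..<n}"]) (auto intro: finite_PiE)

lemma sum_le_card_mult: "(\<And>i. i \<in> A \<Longrightarrow> f i \<le> (K::nat)) \<Longrightarrow> sum f A \<le> card A * K"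
  using sum_bounded_above[of A f K] by simp

lemma card_conf:
  assumes pSTS: "partial_STS X B" and l1: "1 \<le> l" and ln: "l \<le> card X"
    and e: "e \<in> Sigma B (Gs (card X) l)"
  shows "card (conf e \<inter> Sigma B (Gs (card X) l)) \<le> 6 * card X * (card X - 1) * (2*l-1)^2"
proof -
  define n where "n = card X"
  define K where "K = (2*l-1)^2"
  define Ev where "Ev = Sigma B (Gs n l)"
  obtain b g where eq: "e = (b, g)" and bB: "b \<in> B" and gG: "g \<in> Gs n l b"
    using e unfolding n_def by auto
  have finX: "finite X" using pSTS_D(1)[OF pSTS] .
  have finB: "finite B" using finite_B[OF pSTS] .
  have bprop: "b' \<subseteq> X \<and> card b' = 3" if "b' \<in> B" for b' using pSTS_D(3)[OF pSTS that] .
  have finb': "finite b'" if "b' \<in> B" for b'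
    using bprop[OF that] by (metis card.infinite zero_neq_numeral)
  define E where "E y Q = Sigma {b'\<in>B. y \<in> b'} (\<lambda>b'. {g' \<in> Gs n l b'. g' y = Q})" for y Q
  have cE: "card (E y Q) \<le> (n - 1) * K" for y Q
  proof -
    have fin1: "finite {b'\<in>B. y \<in> b'}" using finB by simp
    have fin2: "\<forall>b'\<in>{b'\<in>B. y \<in> b'}. finite {g' \<in> Gs n l b'. g' y = Q}"
    proof
      fix b' assume "b' \<in> {b'\<in>B. y \<in> b'}"
      hence "finite (Gs n l b')" using finite_Gs finb' by blast
      thus "finite {g' \<in> Gs n l b'. g' y = Q}" by (rule finite_subset[rotated]) auto
    qed
    have "card (E y Q) = (\<Sum>b'\<in>{b'\<in>B. y \<in> b'}. card {g' \<in> Gs n l b'. g' y = Q})"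
      unfolding E_def using fin1 fin2 by (rule card_SigmaI)
    also have "\<dots> \<le> card {b'\<in>B. y \<in> b'} * K"
    proof (rule sum_le_card_mult)
      fix b' assume "b' \<in> {b'\<in>B. y \<in> b'}"
      hence "b' \<in> B" "y \<in> b'" by auto
      thus "card {g' \<in> Gs n l b'. g' y = Q} \<le> K"
        unfolding K_def using card_fix[OF finb' _ _ l1 ln[folded n_def]] bprop by blast
    qed
    also have "\<dots> \<le> (n - 1) * K" using card_Bx[OF pSTS, of y] unfolding n_def by simp
    finally show ?thesis .
  qed
  have finE: "finite (E y Q)" for y Q
  proof -
    have "\<And>b'. b' \<in> {b'\<in>B. y \<in> b'} \<Longrightarrow> finite {g' \<in> Gs n l b'. g' y = Q}"
    proof -
      fix b' assume "b' \<in> {b'\<in>B. y \<in> b'}"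
      hence "finite (Gs n l b')" using finite_Gs finb' by blast
      thus "finite {g' \<in> Gs n l b'. g' y = Q}" by (rule finite_subset[rotated]) auto
    qed
    thus ?thesis unfolding E_def using finB by (intro finite_SigmaI) auto
  qed
  define U1 where "U1 = (\<Union>x\<in>b. \<Union>Q\<in>{0..<n}. E x Q)"
  define U2 where "U2 = (\<Union>Q\<in>g`b. \<Union>y\<in>X. E y Q)"
  have sub: "conf e \<inter> Ev \<subseteq> U1 \<union> U2"
  proof
    fix e' assume e': "e' \<in> conf e \<inter> Ev"
    obtain b' g' where e'eq: "e' = (b', g')" by fastforce
    have b'B: "b' \<in> B" and g'G: "g' \<in> Gs n l b'" using e' e'eq unfolding Ev_def by auto
    obtain x x' where xb: "x \<in> b" and x'b: "x' \<in> b'" and ne: "(g x = g' x') \<noteq> (x = x')"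
      using e' e'eq eq unfolding conf_def by auto
    show "e' \<in> U1 \<union> U2"
    proof (cases "x = x'")
      case True
      have "g' x \<in> {0..<n}" using g'G x'b True unfolding Gs_def by auto
      moreover have "e' \<in> E x (g' x)" unfolding E_def e'eq using b'B g'G x'b True by auto
      ultimately show ?thesis unfolding U1_def using xb by blast
    next
      case False
      hence gg: "g x = g' x'" using ne by simp
      have "x' \<in> X" using bprop[OF b'B] x'b by blast
      moreover have "e' \<in> E x' (g x)" unfolding E_def e'eq using b'B g'G x'b gg by auto
      ultimately show ?thesis unfolding U2_def using xb by blast
    qed
  qed
  have cb: "card b = 3" using bprop[OF bB] by simp
  have finb: "finite b" using finb'[OF bB] .
  have "card U1 \<le> (\<Sum>x\<in>b. card (\<Union>Q\<in>{0..<n}. E x Q))" unfolding U1_def using finb by (rule card_UN_le)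
  also have "\<dots> \<le> card b * (n * ((n - 1) * K))"
  proof (rule sum_le_card_mult)
    fix x assume "x \<in> b"
    have "card (\<Union>Q\<in>{0..<n}. E x Q) \<le> (\<Sum>Q\<in>{0..<n}. card (E x Q))" by (rule card_UN_le) simp
    also have "\<dots> \<le> card {0..<n} * ((n - 1) * K)" by (rule sum_le_card_mult) (rule cE)
    finally show "card (\<Union>Q\<in>{0..<n}. E x Q) \<le> n * ((n - 1) * K)" by simp
  qed
  finally have c1: "card U1 \<le> 3 * (n * ((n - 1) * K))" using cb by simp
  have "card U2 \<le> (\<Sum>Q\<in>g`b. card (\<Union>y\<in>X. E y Q))" unfolding U2_def using finb by (intro card_UN_le) simp
  also have "\<dots> \<le> card (g`b) * (n * ((n - 1) * K))"
  proof (rule sum_le_card_mult)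
    fix Q assume "Q \<in> g ` b"
    have "card (\<Union>y\<in>X. E y Q) \<le> (\<Sum>y\<in>X. card (E y Q))" using finX by (rule card_UN_le)
    also have "\<dots> \<le> card X * ((n - 1) * K)" by (rule sum_le_card_mult) (rule cE)
    finally show "card (\<Union>y\<in>X. E y Q) \<le> n * ((n - 1) * K)" unfolding n_def by simp
  qed
  also have "card (g`b) \<le> 3" using card_image_le[OF finb, of g] cb by simp
  hence "card (g`b) * (n * ((n - 1) * K)) \<le> 3 * (n * ((n - 1) * K))" by (rule mult_right_mono) simp
  finally have c2: "card U2 \<le> 3 * (n * ((n - 1) * K))" .
  have finU: "finite (U1 \<union> U2)" unfolding U1_def U2_def using finb finX finE by auto
  have "card (conf e \<inter> Ev) \<le> card (U1 \<union> U2)" using card_mono[OF finU sub] .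
  also have "\<dots> \<le> card U1 + card U2" by (rule card_Un_le)
  also have "\<dots> \<le> 6 * n * (n - 1) * K" using c1 c2 by simp
  finally show ?thesis unfolding Ev_def K_def n_def .
qed


lemma card_win: "card (win n l i) \<le> l"
proof -
  have "win n l i = (\<lambda>j. (i + j) mod n) ` {..<l}" unfolding win_def by auto
  thus ?thesis using card_image_le[of "{..<l}" "\<lambda>j. (i + j) mod n"] by simp
qed

lemma Gs_empty: assumes "card b = 3" "l \<le> 2" shows "Gs n l b = {}"
proof (rule ccontr)
  assume "Gs n l b \<noteq> {}"
  then obtain g i where g: "inj_on g b" "g ` b \<subseteq> win n l i" unfolding Gs_def by blast
  have fw: "finite (win n l i)" unfolding win_def by simp
  have "card (g ` b) = 3" using g(1) assms(1) by (simp add: card_image)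
  moreover have "card (g ` b) \<le> card (win n l i)" using card_mono[OF fw g(2)] .
  ultimately show False using card_win[of n l i] assms(2) by simp
qed

lemma arith_main:
  fixes L N :: real
  assumes L3: "L \<ge> 3" and h: "L \<le> 0.0908 * sqrt N" and N0: "N \<ge> 0"
  shows "24 * (2*L - 1)^2 \<le> N - 2" "L \<le> N" "N \<ge> 1000"
proof -
  have "L^2 \<le> (0.0908 * sqrt N)^2" using h L3 by (intro power_mono) auto
  also have "\<dots> = 0.0908^2 * (sqrt N)^2" by (rule power_mult_distrib)
  also have "(sqrt N)^2 = N" using N0 by simp
  also have "(0.0908::real)^2 = 0.00824464" by (simp add: power2_eq_square)
  finally have L2': "L^2 \<le> 0.00824464 * N" .
  have "0.00824464 * N \<le> N / 121" using N0 by simp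
  hence L2: "L^2 \<le> N / 121" using L2' by linarith
  have "3 * 3 \<le> L * L" using L3 by (intro mult_mono) auto
  hence "9 \<le> L^2" by (simp add: power2_eq_square)
  hence N1: "N \<ge> 1000" using L2 by linarith
  show "N \<ge> 1000" using N1 .
  have "(2*L - 1)^2 \<le> 4 * L^2" using L3 by (simp add: power2_eq_square algebra_simps)
  thus "24 * (2*L - 1)^2 \<le> N - 2" using L2 N1 by linarith
  show "L \<le> N"
  proof (rule ccontr)
    assume "\<not> L \<le> N"
    hence "N < L" by simp
    hence "N * N \<le> L * L" using N0 by (intro mult_mono) auto
    moreover have "1000 * N \<le> N * N" using N1 N0 by (intro mult_right_mono) auto
    moreover have "L * L \<le> N / 121" using L2 by (simp add: power2_eq_square)
    ultimately show False using N1 by linarith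
  qed
qed

theorem corollary3:
  fixes X :: "'a set" and \<B> :: "'a set set" and l :: nat
  assumes "partial_STS X \<B>"
    and "l \<ge> 1"
    and "real l \<le> 0.0908 * sqrt (real (card X))"
  shows "\<exists>\<phi>. cyclically_good X \<B> l \<phi>"
proof -
  note pSTS = assms(1)
  define n where "n = card X"
  have finX: "finite X" using pSTS_D(1)[OF pSTS] .
  have n3: "n \<ge> 3" using pSTS_D(2)[OF pSTS] unfolding n_def .
  have finB: "finite \<B>" using finite_B[OF pSTS] .
  have bprop: "b \<subseteq> X \<and> card b = 3" if "b \<in> \<B>" for b using pSTS_D(3)[OF pSTS that] .
  have finb: "finite b" if "b \<in> \<B>" for b
    using bprop[OF that] by (metis card.infinite zero_neq_numeral)
  obtain h where h: "bij_betw h {0..<n} X" using ex_bij_betw_nat_finite[OF finX] unfolding n_def by blast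
  define \<phi>0 where "\<phi>0 = restrict h {0..<n}"
  have "bij_betw \<phi>0 {0..<n} X = bij_betw h {0..<n} X" unfolding \<phi>0_def by (rule bij_betw_cong) simp
  hence "bij_betw \<phi>0 {0..<n} X" using h by simp
  moreover have "\<phi>0 \<in> {0..<n} \<rightarrow>\<^sub>E X"
  proof -
    have "h i \<in> X" if "i \<in> {0..<n}" for i using h that bij_betwE by blast
    thus ?thesis unfolding \<phi>0_def by simp
  qed
  ultimately have phi0: "\<phi>0 \<in> Om X" unfolding Om_def n_def[symmetric] by blast
  have "Om X \<subseteq> {0..<card X} \<rightarrow>\<^sub>E X" unfolding Om_def by blast
  moreover have "finite ({0..<card X} \<rightarrow>\<^sub>E X)" using finX by (intro finite_PiE) auto
  ultimately have finOm: "finite (Om X)" by (rule finite_subset)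
  show ?thesis
  proof (cases "l \<le> 2")
    case True
    have se: "Sigma \<B> (Gs (card X) l) = {}" using Gs_empty[OF _ True] bprop by auto
    have "\<forall>e\<in>Sigma \<B> (Gs (card X) l). \<phi>0 \<notin> EA X e" unfolding se by simp
    hence "cyclically_good X \<B> l \<phi>0" by (rule good_of_avoid[OF pSTS phi0])
    thus ?thesis by blast
  next
    case False
    hence l3: "real l \<ge> 3" by simp
    note ar = arith_main[OF l3 assms(3)[folded n_def] of_nat_0_le_iff]
    have ln: "l \<le> n" using ar(2) by simp
    define Ev where "Ev = Sigma \<B> (Gs n l)"
    have finEv: "finite Ev" unfolding Ev_def using finB finb finite_Gs by (intro finite_SigmaI) auto
    define d where "d = 6 * n * (n - 1) * (2*l-1)^2"
    define p :: real where "p = 1 / (real n * (real n - 1) * (real n - 2))"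
    have Nn: "real n \<ge> 1000" using ar(3) .
    have den: "real n * (real n - 1) * (real n - 2) > 0" using Nn by simp
    have p0: "0 \<le> p" unfolding p_def using den by simp
    have "real n * (real n - 1) * (real n - 2) \<ge> 3"
    proof -
      have "1 * 1 \<le> real n * (real n - 1)" using Nn by (intro mult_mono) auto
      hence "real n * (real n - 1) \<ge> 1" by simp
      hence "real n * (real n - 1) * (real n - 2) \<ge> 1 * 3" using Nn by (intro mult_mono) auto
      thus ?thesis by simp
    qed
    hence p1: "p < 1/2" unfolding p_def using den by (simp add: divide_simps)
    have rd: "real d = 6 * real n * (real n - 1) * (2 * real l - 1)^2"
      unfolding d_def using n3 \<open>l \<ge> 1\<close> by (simp add: of_nat_diff)
    have pd: "4 * p * real d \<le> 1"
    proof -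
      have "4 * p * real d = 24 * (2 * real l - 1)^2 / (real n - 2)"
        unfolding p_def rd using den Nn by (simp add: field_simps)
      also have "\<dots> \<le> 1" using ar(1) Nn by (simp add: divide_simps)
      finally show ?thesis .
    qed
    have Nd: "card (conf i \<inter> Ev) \<le> d" if "i \<in> Ev" for i
      using card_conf[OF pSTS \<open>l \<ge> 1\<close> ln[unfolded n_def], of i] that unfolding Ev_def d_def n_def by simp
    have neg: "real (card (EA X i \<inter> Av (Om X) (EA X) S)) \<le> p * real (card (Av (Om X) (EA X) S))"
      if iE: "i \<in> Ev" and SE: "S \<subseteq> Ev" and iS: "i \<notin> S" and Sc: "S \<inter> conf i = {}" for i S
    proof -
      obtain b g where ieq: "i = (b, g)" and bB: "b \<in> \<B>" and gG: "g \<in> Gs n l b"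
        using iE unfolding Ev_def by auto
      have gP: "g ` b \<subseteq> {0..<card X}" using gG unfolding Gs_def n_def by auto
      have ginj: "inj_on g b" using gG unfolding Gs_def by auto
      have nc: "\<forall>x\<in>b. \<forall>x'\<in>fst e'. (g x = snd e' x') = (x = x')" if "e' \<in> S" for e'
      proof -
        have "e' \<notin> conf i" using Sc that by blast
        thus ?thesis unfolding conf_def ieq by auto
      qed
      have main: "card (EA X (b,g) \<inter> Av (Om X) (EA X) S) * card {f \<in> g`b \<rightarrow>\<^sub>E X. inj_on f (g`b)}
          \<le> card (Av (Om X) (EA X) S)"
        using negdep[OF finX _ gP ginj nc] bprop[OF bB] by blast
      have cgb: "card (g ` b) = 3" using ginj bprop[OF bB] by (simp add: card_image)
      have "card {f \<in> g`b \<rightarrow>\<^sub>E X. inj_on f (g`b)} = card X ^ (card (g`b) - card (g`b)) * prod ((-) (card X)) {0..<card (g`b)}"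
        using finb[OF bB] finX by (intro card_inj_on_subset_funcset) auto
      also have "\<dots> = n * (n - 1) * (n - 2)" unfolding cgb n_def by (simp add: numeral_3_eq_3 numeral_2_eq_2)
      finally have cF: "card {f \<in> g`b \<rightarrow>\<^sub>E X. inj_on f (g`b)} = n * (n - 1) * (n - 2)" .
      have rF: "real (n * (n - 1) * (n - 2)) = real n * (real n - 1) * (real n - 2)"
        using n3 by (simp add: of_nat_diff)
      have "real (card (EA X i \<inter> Av (Om X) (EA X) S)) * (real n * (real n - 1) * (real n - 2))
           \<le> real (card (Av (Om X) (EA X) S))"
      proof -
        have "real (card (EA X i \<inter> Av (Om X) (EA X) S) * (n * (n - 1) * (n - 2))) \<le> real (card (Av (Om X) (EA X) S))"
          using main unfolding ieq cF by (simp only: of_nat_le_iff)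
        thus ?thesis unfolding of_nat_mult[of "card (EA X i \<inter> Av (Om X) (EA X) S)"] rF .
      qed
      thus ?thesis unfolding p_def using den by (simp add: field_simps)
    qed
    have Omne: "Om X \<noteq> {}" using phi0 by blast
    obtain \<phi> where phi: "\<phi> \<in> Om X" and av: "\<forall>i\<in>Ev. \<phi> \<notin> EA X i"
      using lll[where \<Omega>="Om X" and I=Ev and A="EA X" and N=conf and p=p and d=d, OF finOm finEv Omne Nd neg pd p0 p1] by blast
    have "cyclically_good X \<B> l \<phi>" using good_of_avoid[OF pSTS phi] av unfolding Ev_def n_def by blast
    thus ?thesis by blast
  qed
qed


end
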